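(* Let $H$ be a hypergraph with $R(H)=\{1,2\}$ such that the graph $H^2$ of its $2$-edges is bipartite and $H$ contains $K_2^{\{1,2\}}$ as a subgraph. Then $\pi(H)=\frac54$.
   Context: A hypergraph $H=(V,E)$ has finite vertex set $V$ and edge set $E\subseteq 2^V$; $R(H)=\{|F|:F\in E\}$. $H_1\subseteq H_2$ (subgraph) means there is an injective $f\colon V(H_1)\to V(H_2)$ with $f(F)\in E(H_2)$ for all $F\in E(H_1)$. For $G$ on $n$ vertices, $h_n(G)=\sum_{F\in E(G)}1/\binom{n}{|F|}$; $\pi_n(H)=\max\{h_n(G): G\text{ on } n \text{ vertices}, R(G)\subseteq R(H), H\not\subseteq G\}$ and $\pi(H)=\lim_n\pi_n(H)$. $K_2^{\{1,2\}}$ is the hypergraph on vertices $\{1,2\}$ with edges $\{1\},\{2\},\{1,2\}$. *)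

theory Defs
  imports Complex_Main
begin

definition hypergraph :: "'a set \<Rightarrow> 'a set set \<Rightarrow> bool" where
  "hypergraph V E \<longleftrightarrow> finite V \<and> E \<subseteq> Pow V"

definition edge_sizes :: "'a set set \<Rightarrow> nat set" where
  "edge_sizes E = card ` E"

definition subhypergraph :: "'a set \<Rightarrow> 'a set set \<Rightarrow> 'b set \<Rightarrow> 'b set set \<Rightarrow> bool" where
  "subhypergraph V1 E1 V2 E2 \<longleftrightarrow>
     (\<exists>f. inj_on f V1 \<and> f ` V1 \<subseteq> V2 \<and> (\<forall>F\<in>E1. f ` F \<in> E2))"

definition two_graph_bipartite :: "'a set \<Rightarrow> 'a set set \<Rightarrow> bool" where
  "two_graph_bipartite V E \<longleftrightarrow>
     (\<exists>A \<subseteq> V. \<forall>F\<in>E. card F = 2 \<longrightarrow> card (F \<inter> A) = 1)"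

definition K2_12_V :: "nat set" where "K2_12_V = {1, 2}"
definition K2_12_E :: "nat set set" where "K2_12_E = {{1}, {2}, {1, 2}}"

definition h_n :: "nat \<Rightarrow> 'a set set \<Rightarrow> real" where
  "h_n n E = (\<Sum>F\<in>E. 1 / real (n choose card F))"

definition pi_n :: "'a set \<Rightarrow> 'a set set \<Rightarrow> nat \<Rightarrow> real" where
  "pi_n V E n = Max {h_n n G | G. G \<subseteq> Pow {0..<n} \<and> edge_sizes G \<subseteq> edge_sizes E
                                   \<and> \<not> subhypergraph V E {0..<n} G}"

end

theory Submission
  imports Defs
begin


lemma nbhd_card:
  assumes P: "P \<subseteq> {F. F \<subseteq> X \<and> card F = 2}"
  shows "card {u. {u,v} \<in> P} = card {F\<in>P. v \<in> F}"
proof -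
  have "bij_betw (\<lambda>u. {u,v}) {u. {u,v} \<in> P} {F\<in>P. v \<in> F}"
  proof (rule bij_betwI')
    fix x y assume "x \<in> {u. {u,v} \<in> P}" "y \<in> {u. {u,v} \<in> P}"
    then have "card {x,v} = 2" "card {y,v} = 2" using P by auto
    then have "x \<noteq> v" "y \<noteq> v" by auto
    then show "({x, v} = {y, v}) = (x = y)" by (auto simp: doubleton_eq_iff)
  next
    fix x assume "x \<in> {u. {u,v} \<in> P}" then show "{x,v} \<in> {F\<in>P. v \<in> F}" by auto
  next
    fix F assume F: "F \<in> {F\<in>P. v \<in> F}"
    then have "card F = 2" using P by auto
    then obtain a b where ab: "F = {a,b}" "a \<noteq> b" by (auto simp: card_2_iff)
    show "\<exists>x\<in>{u. {u, v} \<in> P}. F = {x, v}"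
    proof (cases "a = v")
      case True then show ?thesis using F ab by (intro bexI[of _ b]) (auto simp: insert_commute)
    next
      case False then have "b = v" using F ab by auto
      then show ?thesis using F ab by (intro bexI[of _ a]) auto
    qed
  qed
  then show ?thesis by (rule bij_betw_same_card)
qed

lemma handshake:
  assumes X: "finite X" and P: "P \<subseteq> {F. F \<subseteq> X \<and> card F = 2}"
  shows "(\<Sum>v\<in>X. card {F\<in>P. v \<in> F}) = 2 * card P"
proof -
  have fP: "finite P" using P X by (metis (no_types, lifting) Collect_mono PowI finite_Pow_iff rev_finite_subset subsetI mem_Collect_eq)
  have "(\<Sum>v\<in>X. card {F\<in>P. v \<in> F}) = card (SIGMA v:X. {F\<in>P. v \<in> F})"
    using X fP by (simp)
  also have "\<dots> = card ((\<lambda>(v,F). (F,v)) ` (SIGMA v:X. {F\<in>P. v \<in> F}))"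
    by (rule card_image[symmetric]) (auto simp: inj_on_def)
  also have "(\<lambda>(v,F). (F,v)) ` (SIGMA v:X. {F\<in>P. v \<in> F}) = (SIGMA F:P. F)"
    using P by (auto simp: image_iff) blast
  also have "card (SIGMA F:P. F) = (\<Sum>F\<in>P. card F)"
    using fP P by (intro card_SigmaI) (auto intro: card_ge_0_finite dest!: subsetD)
  also have "\<dots> = (\<Sum>F\<in>P. 2)" using P by (intro sum.cong) auto
  finally show ?thesis by simp
qed

lemma kst_core:
  fixes \<delta> :: real and n m :: nat
  assumes m: "m \<ge> 1" and \<delta>: "\<delta> > 0" and X: "X \<subseteq> {0..<n}"
    and P: "P \<subseteq> {F. F \<subseteq> X \<and> card F = 2}"
    and big: "real (card P) > \<delta> * real n ^ 2" and n1: "\<delta> * n \<ge> m"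
    and n2: "\<delta> ^ (m+1) * n > (real m - 1) * real m ^ m"
  shows "\<exists>S T. S \<subseteq> X \<and> T \<subseteq> X \<and> S \<inter> T = {} \<and> card S = m \<and> card T = m \<and> (\<forall>s\<in>S. \<forall>t\<in>T. {s,t} \<in> P)"
proof -
  define Nb where "Nb v = {u. {u,v} \<in> P}" for v
  define d where "d v = card {F\<in>P. v\<in>F}" for v
  have fX: "finite X" using X finite_subset by blast
  have cX: "card X \<le> n" using X by (metis card_atLeastLessThan card_mono finite_atLeastLessThan diff_zero)
  have NbX: "Nb v \<subseteq> X" for v using P unfolding Nb_def by auto
  have fNb: "finite (Nb v)" for v using NbX fX finite_subset by blast
  have cNb: "card (Nb v) = d v" for v unfolding Nb_def d_def by (rule nbhd_card[OF P])
  have dn: "d v \<le> n" for v using cNb[of v] NbX[of v] fX cX by (metis card_mono le_trans)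
  have sumd: "(\<Sum>v\<in>X. real (d v)) = 2 * real (card P)"
    using handshake[OF fX P] unfolding d_def by (metis of_nat_sum of_nat_mult of_nat_numeral)
  have npos: "n > 0" using n1 m \<delta> by (metis not_gr0 of_nat_0 mult_zero_right of_nat_le_0_iff le_zero_eq not_one_le_zero)
  define L where "L = {v\<in>X. \<delta>*n \<le> real (d v)}"
  have fL: "finite L" using fX unfolding L_def by auto
  have "(\<Sum>v\<in>X. real (d v)) = (\<Sum>v\<in>L. real (d v)) + (\<Sum>v\<in>X-L. real (d v))"
    using fX by (metis (no_types, lifting) L_def add.commute mem_Collect_eq subsetI sum.subset_diff)
  also have "(\<Sum>v\<in>L. real (d v)) \<le> (\<Sum>v\<in>L. real n)" using dn by (intro sum_mono) auto
  also have "(\<Sum>v\<in>X-L. real (d v)) \<le> (\<Sum>v\<in>X-L. \<delta> * n)" by (intro sum_mono) (auto simp: L_def)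
  also have "(\<Sum>v\<in>X-L. \<delta> * n) \<le> card X * (\<delta> * n)"
    using fX \<delta> by (simp add: card_Diff_subset L_def) (intro mult_right_mono, auto intro: card_mono)
  also have "card X * (\<delta> * n) \<le> n * (\<delta> * n)" using cX \<delta> by (intro mult_right_mono) auto
  finally have "2 * real (card P) \<le> card L * real n + n * (\<delta> * n)" using sumd by simp
  with big have "card L * real n > \<delta> * n * n" by (simp add: power2_eq_square algebra_simps)
  then have cL: "real (card L) > \<delta> * n" using npos by (simp add: mult_less_cancel_right)
  define Q where "Q = (SIGMA v:L. {S. S \<subseteq> Nb v \<and> card S = m})"
  have "card Q = (\<Sum>v\<in>L. card {S. S \<subseteq> Nb v \<and> card S = m})"
    unfolding Q_def using fL fNb by (intro card_SigmaI) auto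
  also have "\<dots> = (\<Sum>v\<in>L. d v choose m)" using fNb cNb by (intro sum.cong) (auto simp: n_subsets)
  finally have cQ: "real (card Q) = (\<Sum>v\<in>L. real (d v choose m))" by simp
  have "(\<delta>*n/m)^m \<le> real (d v choose m)" if "v \<in> L" for v
  proof -
    have dv: "\<delta>*n \<le> d v" using that L_def by auto
    then have "m \<le> d v" using n1 by linarith
    have "(\<delta>*n/m)^m \<le> (real (d v)/m)^m" using dv \<delta> m by (intro power_mono divide_right_mono) auto
    also have "\<dots> \<le> real (d v choose m)" using binomial_ge_n_over_k_pow_k[OF \<open>m \<le> d v\<close>] by simp
    finally show ?thesis .
  qed
  then have "(\<Sum>v\<in>L. (\<delta>*n/m)^m) \<le> real (card Q)" unfolding cQ by (intro sum_mono) auto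
  then have Q1: "card L * (\<delta>*n/m)^m \<le> real (card Q)" by simp
  have pp: "(\<delta>*n/m)^m > 0" using \<delta> npos m by auto
  have Q2: "\<delta>*n * (\<delta>*n/m)^m < card L * (\<delta>*n/m)^m" using cL pp by (intro mult_strict_right_mono)
  have key: "(real m - 1) * real n ^ m < \<delta>*n * (\<delta>*n/m)^m"
  proof -
    have e: "\<delta>*n * (\<delta>*n/m)^m = (\<delta>^(m+1) * n) * (real n ^ m / real m ^ m)"
      by (simp add: power_divide power_mult_distrib field_simps)
    have pos: "real n ^ m / real m ^ m > 0" using npos m by auto
    have "(real m - 1) * real n ^ m = ((real m - 1) * real m ^ m) * (real n ^ m / real m ^ m)"
      using m by (simp add: field_simps)
    also have "\<dots> < (\<delta>^(m+1) * n) * (real n ^ m / real m ^ m)"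
      using n2 pos by (intro mult_strict_right_mono)
    finally show ?thesis using e by simp
  qed
  define M where "M = {S. S \<subseteq> {0..<n} \<and> card S = m}"
  define W where "W S = {v\<in>L. S \<subseteq> Nb v}" for S
  have ex: "\<exists>S\<in>M. card (W S) \<ge> m"
  proof (rule ccontr)
    assume "\<not> ?thesis"
    then have lt: "\<forall>S\<in>M. card (W S) \<le> m - 1" by auto
    have fM: "finite M" unfolding M_def by (auto intro: finite_subset[of _ "Pow {0..<n}"])
    have "card Q = card ((\<lambda>(v,S). (S,v)) ` Q)" by (rule card_image[symmetric]) (auto simp: inj_on_def)
    also have "(\<lambda>(v,S). (S,v)) ` Q = (SIGMA S:M. W S)"
      unfolding Q_def M_def W_def using NbX X by (auto simp: image_iff)
    also have "card (SIGMA S:M. W S) = (\<Sum>S\<in>M. card (W S))"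
      using fM fL unfolding W_def by (intro card_SigmaI) auto
    also have "\<dots> \<le> card M * (m - 1)" using lt sum_bounded_above[of M "\<lambda>S. card (W S)" "m-1"] by (simp add: mult.commute)
    also have "card M = n choose m" unfolding M_def using n_subsets[of "{0..<n}" m] by simp
    finally have "card Q \<le> (n choose m) * (m - 1)" .
    then have "real (card Q) \<le> real ((n choose m) * (m - 1))" by (simp only: of_nat_le_iff)
    also have "\<dots> = real (n choose m) * (real m - 1)" using m by (simp add: of_nat_diff)
    also have "\<dots> \<le> real n ^ m * (real m - 1)"
    proof (cases "m \<le> n")
      case True then show ?thesis using m by (intro mult_right_mono) (auto simp del: of_nat_power simp: of_nat_power[symmetric] binomial_le_pow)
    next
      case False then show ?thesis using m by (simp add: binomial_eq_0)
    qed
    finally show False using key Q1 Q2 by (simp add: algebra_simps)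
  qed
  then obtain S where S: "S \<in> M" "card (W S) \<ge> m" by blast
  then obtain T where T: "T \<subseteq> W S" "card T = m" by (metis obtain_subset_with_card_n)
  have Tne: "T \<noteq> {}" using T m by auto
  then obtain t0 where "t0 \<in> T" by blast
  then have "S \<subseteq> Nb t0" "t0 \<in> L" using T unfolding W_def by auto
  then have SX: "S \<subseteq> X" using NbX by blast
  have TX: "T \<subseteq> X" using T unfolding W_def L_def by auto
  have "v \<notin> Nb v" for v using P unfolding Nb_def by auto
  then have disj: "S \<inter> T = {}" using T unfolding W_def by auto
  have "\<forall>s\<in>S. \<forall>t\<in>T. {s,t} \<in> P" using T unfolding W_def Nb_def by auto
  then show ?thesis using SX TX disj S T unfolding M_def by blast
qed

lemma kst:
  fixes \<delta> :: real and m :: nat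
  assumes m: "m \<ge> 1" and \<delta>: "\<delta> > 0"
  shows "\<exists>N. \<forall>n\<ge>N. \<forall>X P. X \<subseteq> {0..<n} \<longrightarrow> P \<subseteq> {F. F \<subseteq> X \<and> card F = 2} \<longrightarrow>
            real (card P) > \<delta> * real n ^ 2 \<longrightarrow>
            (\<exists>S T. S \<subseteq> X \<and> T \<subseteq> X \<and> S \<inter> T = {} \<and> card S = m \<and> card T = m \<and> (\<forall>s\<in>S. \<forall>t\<in>T. {s,t} \<in> P))"
proof -
  define N where "N = nat \<lceil>max (m/\<delta>) (((real m - 1) * real m ^ m + 1) / \<delta>^(m+1))\<rceil>"
  have dp: "\<delta>^(m+1) > 0" using \<delta> by simp
  show ?thesis
  proof (rule exI[of _ N], intro allI impI)
    fix n X P assume n: "N \<le> n" and X: "X \<subseteq> {0..<n}" and P: "P \<subseteq> {F. F \<subseteq> X \<and> card F = 2}"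
      and big: "real (card P) > \<delta> * real n ^ 2"
    have "real N \<ge> max (m/\<delta>) (((real m - 1) * real m ^ m + 1) / \<delta>^(m+1))"
      unfolding N_def by linarith
    then have nn: "real n \<ge> m/\<delta>" "real n \<ge> ((real m - 1) * real m ^ m + 1) / \<delta>^(m+1)"
      using n by (auto simp del: of_nat_le_iff simp: of_nat_le_iff[symmetric])
    have n1: "\<delta> * n \<ge> m" using nn(1) \<delta> by (simp add: field_simps)
    have "\<delta>^(m+1) * n \<ge> (real m - 1) * real m ^ m + 1" using nn(2) dp by (simp add: field_simps)
    then have n2: "\<delta> ^ (m+1) * n > (real m - 1) * real m ^ m" by linarith
    show "\<exists>S T. S \<subseteq> X \<and> T \<subseteq> X \<and> S \<inter> T = {} \<and> card S = m \<and> card T = m \<and> (\<forall>s\<in>S. \<forall>t\<in>T. {s,t} \<in> P)"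
      by (rule kst_core[OF m \<delta> X P big n1 n2])
  qed
qed

lemma choose2_real: "real (n choose 2) = real n * (real n - 1) / 2"
proof -
  have "even (n * (n - 1))" by (induct n) auto
  then have "2 * (n choose 2) = n * (n - 1)" by (simp add: choose_two)
  then have "2 * real (n choose 2) = real n * real (n - 1)" by (metis of_nat_mult of_nat_numeral)
  then show ?thesis by (cases n) auto
qed

lemma real_upper:
  fixes x n :: real
  assumes "0 \<le> x" "x \<le> n" "n \<ge> 2"
  shows "x/n + 1 - x*(x-1)/(n*(n-1)) \<le> 5/4 + 1/(4*(n-1))"
proof -
  have p: "n \<noteq> 0" "n - 1 \<noteq> 0" "n*(n-1) > 0" using assms by auto
  have "5/4 + 1/(4*(n-1)) - (x/n + 1 - x*(x-1)/(n*(n-1))) = (n-2*x)^2/(4*(n*(n-1)))"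
    using p by (simp add: divide_simps) (simp add: power2_eq_square algebra_simps)
  moreover have "(n-2*x)^2/(4*(n*(n-1))) \<ge> 0" using p by simp
  ultimately show ?thesis by linarith
qed

lemma real_lower:
  fixes n k :: nat
  assumes "n \<ge> 2" "k = n div 2"
  shows "5/4 \<le> real k / real n + 1 - real k * (real k - 1) / (real n * (real n - 1))"
proof -
  have p: "real n \<noteq> 0" "real n - 1 \<noteq> 0" "real n * (real n - 1) > 0" using assms by auto
  have "n = 2 * k \<or> n = 2 * k + 1" using assms by arith
  then have c: "real n = 2 * real k \<or> real n = 2 * real k + 1" by auto
  have d: "4 * real k * real n - 4 * real k ^ 2 - real n * real n + real n \<ge> 0"
    using c by (auto simp: power2_eq_square algebra_simps)
  have "real k / real n + 1 - real k * (real k - 1) / (real n * (real n - 1)) - 5/4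
     = (4 * real k * real n - 4 * real k ^ 2 - real n * real n + real n) / (4*(real n * (real n - 1)))"
    using p by (simp add: field_simps power2_eq_square)
  moreover have "(4 * real k * real n - 4 * real k ^ 2 - real n * real n + real n) / (4*(real n * (real n - 1))) \<ge> 0"
    using p d by simp
  ultimately show ?thesis by linarith
qed

lemma edge_card:
  assumes "edge_sizes E = {1, 2}" "F \<in> E"
  shows "card F = 1 \<or> card F = 2"
  using assms unfolding edge_sizes_def by auto

lemma embed:
  fixes V :: "'a set" and E :: "'a set set" and G :: "nat set set"
  assumes hg: "hypergraph V E" and es: "edge_sizes E = {1, 2}" and bip: "two_graph_bipartite V E"
    and S: "S \<subseteq> Y" "finite S" "card S = card V" and T: "T \<subseteq> Y" "finite T" "card T = card V"
    and ST: "S \<inter> T = {}" and edges: "\<forall>s\<in>S. \<forall>t\<in>T. {s,t} \<in> G" and sing: "\<forall>v\<in>Y. {v} \<in> G"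
  shows "subhypergraph V E Y G"
proof -
  have fV: "finite V" and EV: "E \<subseteq> Pow V" using hg unfolding hypergraph_def by auto
  obtain A where A: "A \<subseteq> V" "\<forall>F\<in>E. card F = 2 \<longrightarrow> card (F \<inter> A) = 1"
    using bip unfolding two_graph_bipartite_def by blast
  have fA: "finite A" using A fV finite_subset by blast
  have "card A \<le> card S" using A fV S by (simp add: card_mono)
  then obtain gA where gA: "gA ` A \<subseteq> S" "inj_on gA A" using card_le_inj[OF fA S(2)] by blast
  have "card (V - A) \<le> card T" using fV T by (simp add: card_mono)
  then obtain gB where gB: "gB ` (V - A) \<subseteq> T" "inj_on gB (V - A)" using card_le_inj[of "V - A" T] fV T by blast
  define g where "g v = (if v \<in> A then gA v else gB v)" for v
  have gin: "g v \<in> Y" if "v \<in> V" for v using that gA gB S T unfolding g_def by (auto split: if_splits)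
  have inj: "inj_on g V"
  proof (rule inj_onI)
    fix u w assume u: "u \<in> V" and w: "w \<in> V" and e: "g u = g w"
    show "u = w"
    proof (cases "u \<in> A"; cases "w \<in> A")
      assume "u \<in> A" "w \<in> A" then show ?thesis using e gA unfolding g_def by (auto dest: inj_onD)
    next
      assume "u \<in> A" "w \<notin> A" then have "g u \<in> S" "g w \<in> T" using gA gB w unfolding g_def by auto
      then show ?thesis using e ST by auto
    next
      assume "u \<notin> A" "w \<in> A" then have "g u \<in> T" "g w \<in> S" using gA gB u unfolding g_def by auto
      then show ?thesis using e ST by auto
    next
      assume "u \<notin> A" "w \<notin> A" then show ?thesis using e gB u w unfolding g_def by (auto dest: inj_onD)
    qed
  qed
  have "g ` F \<in> G" if F: "F \<in> E" for F
  proof -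
    have FV: "F \<subseteq> V" using F EV by auto
    consider "card F = 1" | "card F = 2" using edge_card[OF es F] by blast
    then show ?thesis
    proof cases
      case 1 then obtain v where "F = {v}" by (auto simp: card_1_singleton_iff)
      then show ?thesis using gin FV sing by auto
    next
      case 2 then obtain u w where uw: "F = {u,w}" "u \<noteq> w" by (auto simp: card_2_iff)
      have "card (F \<inter> A) = 1" using A 2 F by auto
      then have ca: "card ({u,w} \<inter> A) = 1" using uw by simp
      have o1: "u \<in> A \<or> w \<in> A"
      proof (rule ccontr)
        assume "\<not> (u \<in> A \<or> w \<in> A)"
        then have "{u,w} \<inter> A = {}" by blast
        then show False using ca by simp
      qed
      have o2: "\<not> (u \<in> A \<and> w \<in> A)"
      proof
        assume "u \<in> A \<and> w \<in> A"
        then have "{u,w} \<inter> A = {u,w}" by blast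
        then show False using ca uw by simp
      qed
      from o1 o2 have "(u \<in> A \<and> w \<notin> A) \<or> (w \<in> A \<and> u \<notin> A)" by blast
      then show ?thesis
      proof
        assume "u \<in> A \<and> w \<notin> A"
        then have "g u \<in> S" "g w \<in> T" using gA gB FV uw unfolding g_def by auto
        then show ?thesis using edges uw by auto
      next
        assume "w \<in> A \<and> u \<notin> A"
        then have "g w \<in> S" "g u \<in> T" using gA gB FV uw unfolding g_def by auto
        then show ?thesis using edges uw by (auto simp: insert_commute)
      qed
    qed
  qed
  then show ?thesis unfolding subhypergraph_def using inj gin by blast
qed



lemma h_bound:
  fixes G :: "nat set set" and \<delta> :: real
  assumes G: "G \<subseteq> Pow {0..<n}" and cs: "card ` G \<subseteq> {1,2}" and n: "n \<ge> 2"
    and small: "real (card {F\<in>G. card F = 2 \<and> F \<subseteq> {v. {v}\<in>G}}) \<le> \<delta> * real (n choose 2)"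
  shows "h_n n G \<le> 5/4 + 1/(4*(real n-1)) + \<delta>"
proof -
  define X where "X = {v. {v}\<in>G}"
  have XN: "X \<subseteq> {0..<n}" using G unfolding X_def by auto
  have fX: "finite X" using XN finite_subset by blast
  have fG: "finite G" using G by (meson finite_Pow_iff finite_atLeastLessThan finite_subset)
  define G1 where "G1 = {F\<in>G. card F = 1}"
  define G2 where "G2 = {F\<in>G. card F = 2}"
  have GU: "G = G1 \<union> G2" using cs unfolding G1_def G2_def by auto
  have "h_n n G = (\<Sum>F\<in>G1. 1 / real (n choose card F)) + (\<Sum>F\<in>G2. 1 / real (n choose card F))"
    unfolding h_n_def by (subst GU, intro sum.union_disjoint) (use fG in \<open>auto simp: G1_def G2_def\<close>)
  also have "(\<Sum>F\<in>G1. 1 / real (n choose card F)) = real (card G1) / real n"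
    unfolding G1_def by (simp add: divide_inverse)
  also have "(\<Sum>F\<in>G2. 1 / real (n choose card F)) = real (card G2) / real (n choose 2)"
    unfolding G2_def by (simp add: divide_inverse)
  finally have h: "h_n n G = real (card G1) / real n + real (card G2) / real (n choose 2)" .
  have "G1 = (\<lambda>v. {v}) ` X" unfolding G1_def X_def by (auto simp: card_1_singleton_iff)
  then have c1: "card G1 = card X" by (simp add: card_image)
  define Gin where "Gin = {F\<in>G. card F = 2 \<and> F \<subseteq> X}"
  define Gout where "Gout = {F\<in>G. card F = 2 \<and> \<not> F \<subseteq> X}"
  define A2 where "A2 = {F. F \<subseteq> {0..<n} \<and> card F = 2}"
  define B2 where "B2 = {F. F \<subseteq> X \<and> card F = 2}"
  have fA2: "finite A2" unfolding A2_def by (auto intro: finite_subset[of _ "Pow {0..<n}"])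
  have BA: "B2 \<subseteq> A2" unfolding A2_def B2_def using XN by auto
  have "Gout \<subseteq> A2 - B2" unfolding Gout_def A2_def B2_def using G by auto
  then have co1: "card Gout \<le> card (A2 - B2)" using fA2 by (intro card_mono) auto
  have fB2: "finite B2" using BA fA2 finite_subset by blast
  have co2: "card (A2 - B2) = card A2 - card B2" by (rule card_Diff_subset[OF fB2 BA])
  have cA2: "card A2 = n choose 2" unfolding A2_def using n_subsets[of "{0..<n}" 2] by simp
  have cB2: "card B2 = card X choose 2" unfolding B2_def using n_subsets[OF fX] by simp
  have cout: "card Gout \<le> (n choose 2) - (card X choose 2)" using co1 co2 cA2 cB2 by simp
  have le: "card X choose 2 \<le> n choose 2" using card_mono[OF fA2 BA] cA2 cB2 by simp
  have "G2 = Gin \<union> Gout" unfolding G2_def Gin_def Gout_def by auto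
  then have "card G2 \<le> card Gin + card Gout" by (simp add: card_Un_le)
  then have r1: "real (card G2) \<le> real (card Gin) + real (card Gout)" by linarith
  have r2: "real (card Gout) \<le> real ((n choose 2) - (card X choose 2))" using cout by linarith
  have r3: "real ((n choose 2) - (card X choose 2)) = real (n choose 2) - real (card X choose 2)" by (rule of_nat_diff[OF le])
  have r4: "real (card Gin) \<le> \<delta> * real (n choose 2)" using small unfolding Gin_def X_def .
  have c2: "real (card G2) \<le> \<delta> * real (n choose 2) + real (n choose 2) - real (card X choose 2)"
    using r1 r2 r3 r4 by linarith
  have cp: "real (n choose 2) > 0" using n by (simp add: choose2_real)
  have "real (card G2) / real (n choose 2) \<le> (\<delta> * real (n choose 2) + real (n choose 2) - real (card X choose 2)) / real (n choose 2)"
    using c2 cp by (intro divide_right_mono) auto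
  also have "\<dots> = \<delta> + 1 - real (card X choose 2) / real (n choose 2)"
    using cp by (simp add: field_simps)
  also have "real (card X choose 2) / real (n choose 2) = real (card X) * (real (card X) - 1) / (real n * (real n - 1))"
    unfolding choose2_real by simp
  finally have "h_n n G \<le> real (card X) / real n + 1 - real (card X) * (real (card X) - 1) / (real n * (real n - 1)) + \<delta>"
    unfolding h c1 by linarith
  also have "\<dots> \<le> 5/4 + 1/(4*(real n-1)) + \<delta>"
  proof -
    have "card X \<le> n" using card_mono[OF finite_atLeastLessThan XN] by simp
    then have "real (card X) \<le> real n" by simp
    moreover have "real n \<ge> 2" using n by simp
    ultimately have "real (card X) / real n + 1 - real (card X) * (real (card X) - 1) / (real n * (real n - 1)) \<le> 5/4 + 1/(4*(real n-1))"
      by (intro real_upper) auto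
    then show ?thesis by linarith
  qed
  finally show ?thesis .
qed



definition Sset :: "'a set \<Rightarrow> 'a set set \<Rightarrow> nat \<Rightarrow> real set" where
  "Sset V E n = {h_n n G | G. G \<subseteq> Pow {0..<n} \<and> edge_sizes G \<subseteq> edge_sizes E
                                   \<and> \<not> subhypergraph V E {0..<n} G}"

lemma pi_n_Sset: "pi_n V E n = Max (Sset V E n)" unfolding pi_n_def Sset_def by simp

lemma fin_Sset: "finite (Sset V E n)"
proof -
  have "finite {G. G \<subseteq> Pow {0..<n} \<and> edge_sizes G \<subseteq> edge_sizes E \<and> \<not> subhypergraph V E {0..<n} G}"
    by (rule finite_subset[of _ "Pow (Pow {0..<n})"]) auto
  then show ?thesis unfolding Sset_def by (rule finite_image_set)
qed

lemma K2_edges: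
  assumes "subhypergraph K2_12_V K2_12_E V E"
  obtains a b where "a \<in> V" "b \<in> V" "a \<noteq> b" "{a} \<in> E" "{b} \<in> E" "{a,b} \<in> E"
proof -
  obtain f where f: "inj_on f {1,2}" "f ` {1,2} \<subseteq> V" "\<forall>F\<in>{{1},{2},{1,2::nat}}. f ` F \<in> E"
    using assms unfolding subhypergraph_def K2_12_V_def K2_12_E_def by blast
  have "f 1 \<noteq> f 2" using f(1) by (auto dest: inj_onD)
  then show ?thesis using f by (intro that[of "f 1" "f 2"]) auto
qed

lemma lower:
  fixes V :: "'a set" and E :: "'a set set"
  assumes es: "edge_sizes E = {1, 2}" and K: "subhypergraph K2_12_V K2_12_E V E" and n: "n \<ge> 2"
  shows "\<exists>x\<in>Sset V E n. 5/4 \<le> x"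
proof -
  obtain a b where ab: "a \<in> V" "b \<in> V" "a \<noteq> b" "{a} \<in> E" "{b} \<in> E" "{a,b} \<in> E"
    using K2_edges[OF K] by blast
  define k where "k = n div 2"
  define X where "X = {0..<k}"
  define S1 where "S1 = (\<lambda>v. {v}) ` X"
  define A2 where "A2 = {F. F \<subseteq> {0..<n} \<and> card F = 2}"
  define B2 where "B2 = {F. F \<subseteq> X \<and> card F = 2}"
  define G0 where "G0 = S1 \<union> (A2 - B2)"
  have kn: "k \<le> n" unfolding k_def by simp
  have XN: "X \<subseteq> {0..<n}" unfolding X_def using kn by auto
  have GP: "G0 \<subseteq> Pow {0..<n}" unfolding G0_def S1_def A2_def using XN by auto
  have "card ` G0 \<subseteq> {1,2}" unfolding G0_def S1_def A2_def by auto
  then have ES: "edge_sizes G0 \<subseteq> edge_sizes E" unfolding edge_sizes_def using es[unfolded edge_sizes_def] by simp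
  have NS: "\<not> subhypergraph V E {0..<n} G0"
  proof
    assume "subhypergraph V E {0..<n} G0"
    then obtain g where g: "inj_on g V" "\<forall>F\<in>E. g ` F \<in> G0" unfolding subhypergraph_def by blast
    have s: "g v \<in> X" if "{v} \<in> E" for v
    proof -
      have "{g v} \<in> G0" using g(2) that by force
      then show ?thesis unfolding G0_def S1_def A2_def by auto
    qed
    have ne: "g a \<noteq> g b" using g(1) ab by (auto dest: inj_onD)
    have "{g a, g b} \<in> G0" using g(2) ab(6) by force
    moreover have "{g a, g b} \<subseteq> X" using s ab by auto
    ultimately show False using ne unfolding G0_def S1_def A2_def B2_def by auto
  qed
  have fA2: "finite A2" unfolding A2_def by (auto intro: finite_subset[of _ "Pow {0..<n}"])
  have BA: "B2 \<subseteq> A2" unfolding A2_def B2_def using XN by auto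
  have fB2: "finite B2" using BA fA2 finite_subset by blast
  have fS1: "finite S1" unfolding S1_def X_def by simp
  have cS1: "card S1 = k" unfolding S1_def X_def by (simp add: card_image)
  have cD: "card (A2 - B2) = card A2 - card B2" by (rule card_Diff_subset[OF fB2 BA])
  have cA2: "card A2 = n choose 2" unfolding A2_def using n_subsets[of "{0..<n}" 2] by simp
  have cB2: "card B2 = k choose 2" unfolding B2_def X_def using n_subsets[of "{0..<k}" 2] by simp
  have le: "k choose 2 \<le> n choose 2" using card_mono[OF fA2 BA] cA2 cB2 by simp
  have disj: "S1 \<inter> (A2 - B2) = {}" unfolding S1_def A2_def by auto
  have "h_n n G0 = (\<Sum>F\<in>S1. 1 / real (n choose card F)) + (\<Sum>F\<in>A2 - B2. 1 / real (n choose card F))"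
    unfolding h_n_def G0_def using fS1 fA2 disj by (intro sum.union_disjoint) auto
  also have "(\<Sum>F\<in>S1. 1 / real (n choose card F)) = (\<Sum>F\<in>S1. 1 / real n)"
    unfolding S1_def by (intro sum.cong) auto
  also have "(\<Sum>F\<in>A2 - B2. 1 / real (n choose card F)) = (\<Sum>F\<in>A2 - B2. 1 / real (n choose 2))"
    unfolding A2_def by (intro sum.cong) auto
  finally have "h_n n G0 = real k / real n + real (card (A2 - B2)) / real (n choose 2)"
    using cS1 by (simp add: divide_inverse)
  also have "real (card (A2 - B2)) = real (n choose 2) - real (k choose 2)"
    using cD cA2 cB2 le by (simp add: of_nat_diff)
  finally have h: "h_n n G0 = real k / real n + (real (n choose 2) - real (k choose 2)) / real (n choose 2)" .
  have cp: "real (n choose 2) > 0" using n by (simp add: choose2_real)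
  have "(real (n choose 2) - real (k choose 2)) / real (n choose 2) = 1 - real (k choose 2) / real (n choose 2)"
    using cp by (simp add: field_simps)
  also have "real (k choose 2) / real (n choose 2) = real k * (real k - 1) / (real n * (real n - 1))"
    unfolding choose2_real by simp
  finally have "h_n n G0 = real k / real n + 1 - real k * (real k - 1) / (real n * (real n - 1))"
    using h by simp
  then have "5/4 \<le> h_n n G0" using real_lower[OF n k_def] by simp
  moreover have "h_n n G0 \<in> Sset V E n" unfolding Sset_def using GP ES NS by blast
  ultimately show ?thesis by blast
qed



theorem mainTheorem8:
  fixes V :: "'a set" and E :: "'a set set"
  assumes "hypergraph V E"
    and "edge_sizes E = {1, 2}"
    and "two_graph_bipartite V E"
    and "subhypergraph K2_12_V K2_12_E V E"
  shows "(\<lambda>n. pi_n V E n) \<longlonglongrightarrow> 5 / 4"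
proof (rule metric_LIMSEQ_I)
  note hg = assms(1) and es = assms(2) and bip = assms(3) and K = assms(4)
  fix r :: real assume r: "r > 0"
  have fV: "finite V" using hg unfolding hypergraph_def by auto
  obtain a b where ab: "a \<in> V" "b \<in> V" "a \<noteq> b" "{a} \<in> E" "{b} \<in> E" "{a,b} \<in> E"
    using K2_edges[OF K] by blast
  define m where "m = card V"
  have m1: "m \<ge> 1" unfolding m_def using fV ab(1) by (metis One_nat_def Suc_leI card_gt_0_iff empty_iff)
  define \<delta> where "\<delta> = r / 2"
  have d: "\<delta> > 0" "\<delta>/4 > 0" using r unfolding \<delta>_def by auto
  obtain N1 where N1: "\<forall>n\<ge>N1. \<forall>X P. X \<subseteq> {0..<n} \<longrightarrow> P \<subseteq> {F. F \<subseteq> X \<and> card F = 2} \<longrightarrow>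
            real (card P) > \<delta>/4 * real n ^ 2 \<longrightarrow>
            (\<exists>S T. S \<subseteq> X \<and> T \<subseteq> X \<and> S \<inter> T = {} \<and> card S = m \<and> card T = m \<and> (\<forall>s\<in>S. \<forall>t\<in>T. {s,t} \<in> P))"
    using kst[OF m1 d(2)] by blast
  define N where "N = max (max N1 2) (nat \<lceil>1/r\<rceil> + 2)"
  show "\<exists>no. \<forall>n\<ge>no. dist (pi_n V E n) (5 / 4) < r"
  proof (intro exI[of _ N] allI impI)
    fix n assume nN: "N \<le> n"
    have n2: "n \<ge> 2" and nN1: "n \<ge> N1" and nr: "n \<ge> nat \<lceil>1/r\<rceil> + 2" using nN unfolding N_def by auto
    have fin: "finite (Sset V E n)" by (rule fin_Sset)
    obtain x0 where x0: "x0 \<in> Sset V E n" "5/4 \<le> x0" using lower[OF es K n2] by blast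
    have lo: "5/4 \<le> pi_n V E n" unfolding pi_n_Sset using Max_ge[OF fin x0(1)] x0(2) by linarith
    have "\<forall>x\<in>Sset V E n. x \<le> 5/4 + 1/(4*(real n-1)) + \<delta>"
    proof
      fix x assume "x \<in> Sset V E n"
      then obtain G where G: "x = h_n n G" "G \<subseteq> Pow {0..<n}" "edge_sizes G \<subseteq> edge_sizes E"
        "\<not> subhypergraph V E {0..<n} G" unfolding Sset_def by blast
      have cs: "card ` G \<subseteq> {1,2}" using G(3) es unfolding edge_sizes_def by simp
      define X where "X = {v. {v}\<in>G}"
      define P where "P = {F\<in>G. card F = 2 \<and> F \<subseteq> X}"
      have XN: "X \<subseteq> {0..<n}" using G(2) unfolding X_def by auto
      have small: "real (card P) \<le> \<delta> * real (n choose 2)"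
      proof (rule ccontr)
        assume "\<not> ?thesis"
        then have big0: "real (card P) > \<delta> * real (n choose 2)" by simp
        have "real n ^ 2 / 4 \<le> real (n choose 2)" using n2 unfolding choose2_real
          by (simp add: power2_eq_square field_simps)
        then have "\<delta>/4 * real n ^ 2 \<le> \<delta> * real (n choose 2)" using d by (simp add: field_simps)
        then have big: "real (card P) > \<delta>/4 * real n ^ 2" using big0 by linarith
        have PX: "P \<subseteq> {F. F \<subseteq> X \<and> card F = 2}" unfolding P_def by auto
        obtain S T where ST: "S \<subseteq> X" "T \<subseteq> X" "S \<inter> T = {}" "card S = m" "card T = m"
          "\<forall>s\<in>S. \<forall>t\<in>T. {s,t} \<in> P" using N1[rule_format, OF nN1 XN PX big] by blast
        have fS: "finite S" "finite T" using ST XN finite_subset by (metis finite_atLeastLessThan subset_trans)+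
        have "subhypergraph V E X G"
          by (rule embed[OF hg es bip ST(1) fS(1) ST(4)[unfolded m_def] ST(2) fS(2) ST(5)[unfolded m_def] ST(3)])
             (use ST(6) in \<open>auto simp: P_def X_def\<close>)
        then have "subhypergraph V E {0..<n} G" using XN unfolding subhypergraph_def by blast
        then show False using G(4) by blast
      qed
      show "x \<le> 5/4 + 1/(4*(real n-1)) + \<delta>" unfolding G(1)
        by (rule h_bound[OF G(2) cs n2]) (use small in \<open>simp add: P_def X_def\<close>)
    qed
    then have up: "pi_n V E n \<le> 5/4 + 1/(4*(real n-1)) + \<delta>"
      unfolding pi_n_Sset using fin x0(1) by (intro Max.boundedI) auto
    have "real n - 1 \<ge> 1/r + 1" using nr by linarith
    then have "1/(4*(real n-1)) < r/2"
    proof -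
      assume h: "real n - 1 \<ge> 1/r + 1"
      have pos: "real n - 1 > 0" using n2 by simp
      have "1/r < real n - 1" using h by linarith
      then have "1 < r * (real n - 1)" using r by (simp add: field_simps)
      then show ?thesis using pos r by (simp add: field_simps)
    qed
    then show "dist (pi_n V E n) (5 / 4) < r" using lo up unfolding dist_real_def \<delta>_def by linarith
  qed
qed


end
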